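(* Consider the following setup. Let $K<\infty$ and, for $i=1,\ldots,K$, let $\{T^{(i)}_{n_i}\}$ be a sequence of test statistics for testing $H_0^{(i)}:\theta_i\in\Theta_0^{(i)}$ against $\theta_i\in\Theta^{(i)}\setminus\Theta_0^{(i)}$, with $p$-values $p_i=p_i^{(n_i)}$, independent under the null for all sample sizes, each with exact slope $c_i(\theta_i)\ge0$ (i.e. $-\frac{2}{n_i}\log p_i^{(n_i)}\to c_i(\theta_i)$ with probability one as $n_i\to\infty$), where $c_i(\theta_i)=0$ for $\theta_i\in\Theta_0^{(i)}$ and $c_i(\theta_i)>0$ otherwise. Let $n=\frac1K\sum_in_i$, $n_i/n\to\lambda_i>0$, $\sum_i\lambda_i=K$, and assume $\lambda_1c_1(\theta_1)\ge\cdots\ge\lambda_Kc_K(\theta_K)\ge0$ with $c_i(\theta_i)>0$ exactly for $1\le i\le\ell$. For a fixed $\tau\in(0,1]$ define $$T_{\mathrm{TFhard}}(\tau)=\sum_{i=1}^K(-2\log p_i)\,\mathrm{I}_{\{p_i\le\tau\}},\qquad T_{\mathrm{TFsoft}}(\tau)=\sum_{i=1}^K(-2\log p_i+2\log\tau)_+,$$ where $(x)_+=\max(x,0)$. Then both tests are ABO, with exact slopes $C_{\mathrm{TFhard}}(\vec\theta)=C_{\mathrm{TFsoft}}(\vec\theta)=\sum_{i=1}^\ell\lambda_ic_i(\theta_i)$.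
   Context: The exact slope of a combination test with $p$-value $p$ (computed from its null distribution, under which $p_1,\ldots,p_K$ are i.i.d. Unif$(0,1)$) is the function $C(\vec\theta)$ with $-\frac{2}{n}\log p\to C(\vec\theta)$ with probability one as $n\to\infty$. A combination test is asymptotically Bahadur optimal (ABO) if its exact slope equals $\sum_{i=1}^\ell\lambda_ic_i(\theta_i)$. *)

theory Defs
  imports "HOL-Probability.Probability"
begin

definition null_unif :: "nat \<Rightarrow> (nat \<Rightarrow> real) measure" where
  "null_unif K = PiM {1..K} (\<lambda>_. uniform_measure lborel {0..1})"

definition comb_stat :: "nat \<Rightarrow> (real \<Rightarrow> real) \<Rightarrow> (nat \<Rightarrow> real) \<Rightarrow> real" where
  "comb_stat K g ps = (\<Sum>i=1..K. g (ps i))"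

definition comb_pvalue :: "nat \<Rightarrow> (real \<Rightarrow> real) \<Rightarrow> (nat \<Rightarrow> real) \<Rightarrow> real" where
  "comb_pvalue K g ps =
     measure (null_unif K) {u \<in> space (null_unif K). comb_stat K g u \<ge> comb_stat K g ps}"

definition tf_hard :: "real \<Rightarrow> real \<Rightarrow> real" where
  "tf_hard \<tau> x = (if x \<le> \<tau> then -2 * ln x else 0)"

definition tf_soft :: "real \<Rightarrow> real \<Rightarrow> real" where
  "tf_soft \<tau> x = max (-2 * ln x + 2 * ln \<tau>) 0"

definition has_exact_slope ::
  "'w measure \<Rightarrow> (nat \<Rightarrow> real) \<Rightarrow> (nat \<Rightarrow> 'w \<Rightarrow> real) \<Rightarrow> real \<Rightarrow> bool" where
  "has_exact_slope M n pv C \<longleftrightarrow>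
     (AE \<omega> in M. ((\<lambda>m. - (2 / n m) * ln (pv m \<omega>)) \<longlongrightarrow> C) sequentially)"

end

theory Submission
  imports Defs
begin

abbreviation "U01 \<equiv> uniform_measure lborel {0..1::real}"

lemma U01_prob: "prob_space U01"
  by (rule prob_space_uniform_measure) auto

lemma sets_U01[simp]: "sets U01 = sets borel" by simp
lemma space_U01[simp]: "space U01 = UNIV" by simp

lemma emeasure_U01_Icc:
  assumes "0 \<le> a" "a \<le> b" "b \<le> 1"
  shows "emeasure U01 {a..b} = ennreal (b - a)"
  using assms by (simp add: Int_absorb1 divide_ennreal_def)

lemma emeasure_U01_Ioc:
  assumes "0 \<le> a" "a \<le> b" "b \<le> 1"
  shows "emeasure U01 {a<..b} = ennreal (b - a)"
proof -
  have "{0..1} \<inter> {a<..b} = {a<..b}" using assms by auto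
  then show ?thesis using assms by (simp add: divide_ennreal_def)
qed

lemma null_box:
  assumes "\<And>i. i \<in> {1..K} \<Longrightarrow> A i \<in> sets borel"
  shows "emeasure (null_unif K) (PiE {1..K} A) = (\<Prod>i\<in>{1..K}. emeasure U01 (A i))"
proof -
  interpret U: prob_space U01 by (rule U01_prob)
  interpret product_prob_space "\<lambda>_. U01" "{1..K}" by unfold_locales
  show ?thesis unfolding null_unif_def
    by (rule emeasure_PiM) (use assms in auto)
qed

lemma null_prob: "prob_space (null_unif K)"
  unfolding null_unif_def by (rule prob_space_PiM) (rule U01_prob)

lemma comb_stat_meas:
  assumes "g \<in> borel_measurable borel"
  shows "comb_stat K g \<in> borel_measurable (null_unif K)"
  unfolding comb_stat_def null_unif_def
  using assms by measurable


lemma pv_lower: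
  assumes K: "1 \<le> K" and gm: "g \<in> borel_measurable borel"
    and g0: "\<And>x. 0 \<le> x \<Longrightarrow> x \<le> 1 \<Longrightarrow> 0 \<le> g x"
    and gt: "\<And>x. 0 < x \<Longrightarrow> x \<le> e \<Longrightarrow> t \<le> g x"
    and e: "0 < e" "e \<le> 1"
  shows "e \<le> measure (null_unif K) {u \<in> space (null_unif K). t \<le> comb_stat K g u}"
proof -
  interpret N: prob_space "null_unif K" by (rule null_prob)
  define B where "B = PiE {1..K} (\<lambda>i. if i = 1 then {0<..e} else {0..1::real})"
  have "emeasure (null_unif K) B = (\<Prod>i\<in>{1..K}. emeasure U01 (if i = 1 then {0<..e} else {0..1}))"
    unfolding B_def by (rule null_box) auto
  also have "\<dots> = (\<Prod>i\<in>{1..K}. ennreal (if i = 1 then e else 1))"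
    by (rule prod.cong) (use e in \<open>auto simp del: emeasure_uniform_measure simp: emeasure_U01_Ioc emeasure_U01_Icc\<close>)
  also have "\<dots> = ennreal e"
  proof -
    have "{1..K} = insert 1 {2..K}" using K by auto
    then show ?thesis by simp
  qed
  finally have mB: "measure (null_unif K) B = e"
    using e by (simp add: N.emeasure_eq_measure)
  have Bs: "B \<in> sets (null_unif K)" unfolding B_def null_unif_def
    by (rule sets_PiM_I_finite) auto
  have sub: "B \<subseteq> {u \<in> space (null_unif K). t \<le> comb_stat K g u}"
  proof
    fix u assume u: "u \<in> B"
    have sp: "u \<in> space (null_unif K)" using Bs u sets.sets_into_space by blast
    have "{1..K} = insert 1 {2..K}" using K by auto
    then have "comb_stat K g u = g (u 1) + (\<Sum>i=2..K. g (u i))"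
      unfolding comb_stat_def by simp
    moreover have "u 1 \<in> {0<..e}" using u K unfolding B_def PiE_iff by (metis atLeastAtMost_iff order_refl)
    then have "t \<le> g (u 1)" by (auto intro!: gt)
    moreover have "0 \<le> (\<Sum>i=2..K. g (u i))"
      proof (intro sum_nonneg g0)
      fix i assume i: "i \<in> {2..K}"
      then have "u i \<in> {0..1}" using u unfolding B_def PiE_iff by (metis atLeastAtMost_iff le_trans one_le_numeral numeral_One numeral_le_one_iff semiring_norm(69))
      then show "0 \<le> u i" "u i \<le> 1" by auto
    qed
    ultimately show "u \<in> {u \<in> space (null_unif K). t \<le> comb_stat K g u}" using sp by simp
  qed
  have ms: "{u \<in> space (null_unif K). t \<le> comb_stat K g u} \<in> sets (null_unif K)"
    using comb_stat_meas[OF gm] by measurable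
  show ?thesis using N.finite_measure_mono[OF sub ms] mB by simp
qed


lemma null_box_measure:
  assumes "\<And>i. i \<in> {1..K} \<Longrightarrow> 0 \<le> a i \<and> a i \<le> 1"
  shows "measure (null_unif K) (PiE {1..K} (\<lambda>i. {0..a i})) = (\<Prod>i\<in>{1..K}. a i)"
proof -
  interpret N: prob_space "null_unif K" by (rule null_prob)
  have "emeasure (null_unif K) (PiE {1..K} (\<lambda>i. {0..a i})) = (\<Prod>i\<in>{1..K}. emeasure U01 {0..a i})"
    by (rule null_box) auto
  also have "\<dots> = (\<Prod>i\<in>{1..K}. ennreal (a i))"
    by (rule prod.cong) (use assms in \<open>auto simp del: emeasure_uniform_measure simp: emeasure_U01_Icc\<close>)
  also have "\<dots> = ennreal (\<Prod>i\<in>{1..K}. a i)"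
    by (rule prod_ennreal) (use assms in auto)
  finally have "ennreal (measure (null_unif K) (PiE {1..K} (\<lambda>i. {0..a i}))) = ennreal (\<Prod>i\<in>{1..K}. a i)"
    by (simp add: N.emeasure_eq_measure)
  then show ?thesis
    using assms by (subst (asm) ennreal_inj) (auto intro: prod_nonneg)
qed

lemma pv_upper:
  assumes gle: "\<And>x. 0 \<le> x \<Longrightarrow> x \<le> 1 \<Longrightarrow> g x \<le> - 2 * ln x"
    and M: "real M + real K \<le> t / 2"
  shows "measure (null_unif K) {u \<in> space (null_unif K). t \<le> comb_stat K g u}
           \<le> real (M + 1) ^ K * exp (- real M)"
proof -
  interpret N: prob_space "null_unif K" by (rule null_prob)
  define A where "A = {u \<in> space (null_unif K). t \<le> comb_stat K g u}"
  define F where "F = PiE {1..K} (\<lambda>_. {0..M}) \<inter> {k. M \<le> (\<Sum>i\<in>{1..K}. k i)}"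
  define Bx where "Bx = (\<lambda>k. PiE {1..K} (\<lambda>i. {0..exp (- real (k i))}))"
  define Z where "Z = space (null_unif K) - PiE {1..K} (\<lambda>_. {0..1::real})"
  have sp: "space (null_unif K) = PiE {1..K} (\<lambda>_. UNIV)"
    unfolding null_unif_def by (simp add: space_PiM)
  have finF: "finite F" unfolding F_def by (intro finite_Int disjI1 finite_PiE) auto
  have Bxs: "Bx k \<in> sets (null_unif K)" for k
    unfolding Bx_def null_unif_def by (rule sets_PiM_I_finite) auto
  have box01s: "PiE {1..K} (\<lambda>_. {0..1::real}) \<in> sets (null_unif K)"
    unfolding null_unif_def by (rule sets_PiM_I_finite) auto
  have Zs: "Z \<in> sets (null_unif K)" unfolding Z_def using box01s by auto
  have mZ: "measure (null_unif K) Z = 0"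
  proof -
    have "measure (null_unif K) (PiE {1..K} (\<lambda>_. {0..1::real})) = 1"
      using null_box_measure[of K "\<lambda>_. 1"] by simp
    then show ?thesis unfolding Z_def using N.prob_compl[OF box01s] by simp
  qed
  have mBx: "measure (null_unif K) (Bx k) \<le> exp (- real M)" if k: "k \<in> F" for k
  proof -
    have "measure (null_unif K) (Bx k) = (\<Prod>i\<in>{1..K}. exp (- real (k i)))"
      unfolding Bx_def by (rule null_box_measure) auto
    also have "\<dots> = exp (- real (\<Sum>i\<in>{1..K}. k i))"
      by (simp add: exp_sum[symmetric] sum_negf)
    also have "\<dots> \<le> exp (- real M)"
    proof -
      have "M \<le> (\<Sum>i\<in>{1..K}. k i)" using k unfolding F_def by auto
      then have "real M \<le> real (\<Sum>i\<in>{1..K}. k i)" by (simp only: of_nat_le_iff)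
      then show ?thesis by (simp only: exp_le_cancel_iff neg_le_iff_le)
    qed
    finally show ?thesis .
  qed
  have sub: "A \<subseteq> (\<Union>k\<in>F. Bx k) \<union> Z"
  proof
    fix u assume uA: "u \<in> A"
    show "u \<in> (\<Union>k\<in>F. Bx k) \<union> Z"
    proof (cases "u \<in> Z")
      case False
      then have u01: "u \<in> PiE {1..K} (\<lambda>_. {0..1::real})" using uA unfolding A_def Z_def by auto
      then have u0: "0 \<le> u i" "u i \<le> 1" if "i \<in> {1..K}" for i using that by auto
      define k' where "k' = (\<lambda>i. nat \<lfloor>- ln (u i)\<rfloor>)"
      define k where "k = restrict (\<lambda>i. min (k' i) M) {1..K}"
      have lnu: "0 \<le> - ln (u i)" if "i \<in> {1..K}" for i
        using u0[OF that] by (cases "u i = 0") auto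
      have k'le: "real (k' i) \<le> - ln (u i)" if "i \<in> {1..K}" for i
        using lnu[OF that] unfolding k'_def by linarith
      have k'gt: "- ln (u i) - 1 < real (k' i)" for i
        unfolding k'_def by linarith
      have uk': "u i \<le> exp (- real (k' i))" if "i \<in> {1..K}" for i
      proof (cases "u i = 0")
        case True then show ?thesis by simp
      next
        case False
        then have "0 < u i" using u0[OF that] by auto
        then have "u i = exp (ln (u i))" by simp
        also have "\<dots> \<le> exp (- real (k' i))" using k'le[OF that] by simp
        finally show ?thesis .
      qed
      have kF: "k \<in> F"
      proof -
        have "k \<in> PiE {1..K} (\<lambda>_. {0..M})" unfolding k_def by auto
        moreover have "M \<le> (\<Sum>i\<in>{1..K}. k i)"
        proof (cases "\<exists>i\<in>{1..K}. M \<le> k' i")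
          case True
          then obtain j where j: "j \<in> {1..K}" "M \<le> k' j" by auto
          have "M = k j" using j unfolding k_def by auto
          also have "\<dots> \<le> (\<Sum>i\<in>{1..K}. k i)"
            by (rule member_le_sum) (use j in auto)
          finally show ?thesis .
        next
          case False
          have kk: "k i = k' i" if "i \<in> {1..K}" for i
          proof -
            have "\<not> M \<le> k' i" using False that by blast
            then show ?thesis using that by (simp add: k_def)
          qed
          have "t \<le> comb_stat K g u" using uA unfolding A_def by auto
          also have "\<dots> = (\<Sum>i\<in>{1..K}. g (u i))" unfolding comb_stat_def by simp
          also have "\<dots> \<le> (\<Sum>i\<in>{1..K}. 2 * (real (k' i) + 1))"
          proof (rule sum_mono)
            fix i assume i: "i \<in> {1..K}"
            show "g (u i) \<le> 2 * (real (k' i) + 1)"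
              using gle[OF u0[OF i]] k'gt[of i] by (smt (verit))
          qed
          also have "\<dots> = 2 * real (\<Sum>i\<in>{1..K}. k' i) + 2 * real K"
            by (simp add: sum.distrib sum_distrib_left)
          finally have "real M \<le> real (\<Sum>i\<in>{1..K}. k' i)" using M by linarith
          then have "M \<le> (\<Sum>i\<in>{1..K}. k' i)" by linarith
          also have "\<dots> = (\<Sum>i\<in>{1..K}. k i)" by (rule sum.cong) (auto simp: kk)
          finally show ?thesis .
        qed
        ultimately show ?thesis unfolding F_def by auto
      qed
      have "u \<in> Bx k"
        unfolding Bx_def
      proof (rule PiE_I)
        fix i assume i: "i \<in> {1..K}"
        have "exp (- real (k' i)) \<le> exp (- real (k i))" using i unfolding k_def by auto
        then have "u i \<le> exp (- real (k i))" using uk'[OF i] by linarith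
        then show "u i \<in> {0..exp (- real (k i))}" using u0[OF i] by auto
      next
        fix i assume "i \<notin> {1..K}" then show "u i = undefined" using u01 by (auto simp: PiE_def extensional_def)
      qed
      then show ?thesis using kF by auto
    qed auto
  qed
  have Us: "(\<Union>k\<in>F. Bx k) \<in> sets (null_unif K)"
    using finF Bxs by (intro sets.finite_UN) auto
  have "measure (null_unif K) A \<le> measure (null_unif K) ((\<Union>k\<in>F. Bx k) \<union> Z)"
    by (rule N.finite_measure_mono[OF sub]) (use Us Zs in auto)
  also have "\<dots> \<le> measure (null_unif K) (\<Union>k\<in>F. Bx k) + measure (null_unif K) Z"
    by (rule measure_Un_le) (use Us Zs in auto)
  also have "\<dots> \<le> (\<Sum>k\<in>F. measure (null_unif K) (Bx k))"
    using N.finite_measure_subadditive_finite[OF finF, of Bx] Bxs mZ by auto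
  also have "\<dots> \<le> (\<Sum>k\<in>F. exp (- real M))" by (rule sum_mono) (rule mBx)
  also have "\<dots> = real (card F) * exp (- real M)" by simp
  also have "\<dots> \<le> real (M + 1) ^ K * exp (- real M)"
  proof -
    have "card F \<le> card (PiE {1..K} (\<lambda>_. {0..M}))"
      unfolding F_def by (rule card_mono) (auto intro: finite_PiE)
    also have "\<dots> = (M + 1) ^ K" by (simp add: card_PiE)
    finally have "real (card F) \<le> real (M + 1) ^ K" by (metis of_nat_le_iff of_nat_power)
    then show ?thesis by simp
  qed
  finally show ?thesis unfolding A_def .
qed


lemma ln_le_2sqrt: "1 \<le> (y::real) \<Longrightarrow> ln y \<le> 2 * sqrt y"
proof -
  assume y: "1 \<le> y"
  have "ln (sqrt y) \<le> sqrt y - 1" using y by (intro ln_le_minus_one) auto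
  then show ?thesis using y by (simp add: ln_sqrt)
qed

lemma slope_squeeze:
  fixes n t p :: "nat \<Rightarrow> real" and C D E S :: real
  assumes n: "filterlim n at_top sequentially"
    and t0: "\<And>m. 0 \<le> t m"
    and tS: "((\<lambda>m. t m / n m) \<longlongrightarrow> S) sequentially"
    and lo: "\<And>m. E - t m / 2 \<le> ln (p m)"
    and up: "\<And>m. ln (p m) \<le> - t m / 2 + C + D * ln (t m / 2 + 1)"
    and D: "0 \<le> D"
  shows "((\<lambda>m. - (2 / n m) * ln (p m)) \<longlongrightarrow> S) sequentially"
proof -
  have ninf: "filterlim n at_infinity sequentially" by (rule filterlim_at_top_imp_at_infinity[OF n])
  have c0: "((\<lambda>m. c / n m) \<longlongrightarrow> 0) sequentially" for c
    by (rule tendsto_divide_0[OF tendsto_const ninf])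
  have npos: "\<forall>\<^sub>F m in sequentially. 0 < n m"
    using n by (simp add: filterlim_at_top_dense)
  have hi: "((\<lambda>m. t m / n m - 2 * E / n m) \<longlongrightarrow> S) sequentially"
    using tendsto_diff[OF tS c0[of "2 * E"]] by simp
  have sq: "((\<lambda>m. sqrt ((t m / n m) / (2 * n m) + 1 / (n m * n m))) \<longlongrightarrow> 0) sequentially"
  proof -
    have "((\<lambda>m. (t m / n m) * (1 / (2 * n m)) + (1 / n m) * (1 / n m)) \<longlongrightarrow> S * 0 + 0 * 0) sequentially"
    proof (intro tendsto_intros tS c0)
      show "((\<lambda>m. 1 / (2 * n m)) \<longlongrightarrow> 0) sequentially"
        using c0[of "1/2"] by simp
    qed
    then have "((\<lambda>m. (t m / n m) / (2 * n m) + 1 / (n m * n m)) \<longlongrightarrow> 0) sequentially"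
      by simp
    from tendsto_real_sqrt[OF this] show ?thesis by simp
  qed
  have lnq: "((\<lambda>m. ln (t m / 2 + 1) / n m) \<longlongrightarrow> 0) sequentially"
  proof (rule tendsto_sandwich[OF _ _ tendsto_const tendsto_mult_right_zero[OF sq, of 2]])
    show "\<forall>\<^sub>F m in sequentially. 0 \<le> ln (t m / 2 + 1) / n m"
      using npos by eventually_elim (use t0 in auto)
    show "\<forall>\<^sub>F m in sequentially. ln (t m / 2 + 1) / n m \<le> 2 * sqrt ((t m / n m) / (2 * n m) + 1 / (n m * n m))"
      using npos
    proof eventually_elim
      case (elim m)
      have "ln (t m / 2 + 1) \<le> 2 * sqrt (t m / 2 + 1)" using t0[of m] by (intro ln_le_2sqrt) auto
      then have a: "ln (t m / 2 + 1) / n m \<le> 2 * (sqrt (t m / 2 + 1) / n m)"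
        using elim by (simp add: divide_right_mono)
      have b: "sqrt (t m / 2 + 1) / n m = sqrt ((t m / 2 + 1) / (n m * n m))"
        using elim by (simp add: real_sqrt_divide real_sqrt_mult)
      have c: "(t m / 2 + 1) / (n m * n m) = (t m / n m) / (2 * n m) + 1 / (n m * n m)"
        using elim by (simp add: field_simps)
      show ?case using a unfolding b c .
    qed
  qed
  have low: "((\<lambda>m. t m / n m - 2 * C / n m - 2 * D * (ln (t m / 2 + 1) / n m)) \<longlongrightarrow> S) sequentially"
    using tendsto_diff[OF tendsto_diff[OF tS c0[of "2 * C"]] tendsto_mult_right_zero[OF lnq, of "2 * D"]]
    by simp
  show ?thesis
  proof (rule tendsto_sandwich[OF _ _ low hi])
    show "\<forall>\<^sub>F m in sequentially. t m / n m - 2 * C / n m - 2 * D * (ln (t m / 2 + 1) / n m) \<le> - (2 / n m) * ln (p m)"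
      using npos
    proof eventually_elim
      case (elim m)
      have "- (2 / n m) * ln (p m) = (- 2 * ln (p m)) / n m" by simp
      moreover have h: "t m - 2 * C - 2 * D * ln (t m / 2 + 1) \<le> - 2 * ln (p m)" using up[of m] by linarith
      have "(t m - 2 * C - 2 * D * ln (t m / 2 + 1)) / n m \<le> (- 2 * ln (p m)) / n m"
        by (rule divide_right_mono[OF h]) (use elim in simp)
      ultimately show ?case by (simp add: diff_divide_distrib)
    qed
    show "\<forall>\<^sub>F m in sequentially. - (2 / n m) * ln (p m) \<le> t m / n m - 2 * E / n m"
      using npos
    proof eventually_elim
      case (elim m)
      have "- (2 / n m) * ln (p m) = (- 2 * ln (p m)) / n m" by simp
      moreover have h: "- 2 * ln (p m) \<le> t m - 2 * E" using lo[of m] by linarith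
      have "(- 2 * ln (p m)) / n m \<le> (t m - 2 * E) / n m"
        by (rule divide_right_mono[OF h]) (use elim in simp)
      ultimately show ?case by (simp add: diff_divide_distrib)
    qed
  qed
qed


lemma pv_bounds:
  assumes K: "1 \<le> K" and gm: "g \<in> borel_measurable borel"
    and g0: "\<And>x. 0 \<le> x \<Longrightarrow> x \<le> 1 \<Longrightarrow> 0 \<le> g x"
    and gle: "\<And>x. 0 \<le> x \<Longrightarrow> x \<le> 1 \<Longrightarrow> g x \<le> - 2 * ln x"
    and gt: "\<And>x. 0 < x \<Longrightarrow> x \<le> \<tau> * exp (- t / 2) \<Longrightarrow> t \<le> g x"
    and \<tau>: "0 < \<tau>" "\<tau> \<le> 1" and t: "0 \<le> t"
  defines "Q \<equiv> measure (null_unif K) {u \<in> space (null_unif K). t \<le> comb_stat K g u}"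
  shows "ln \<tau> - t / 2 \<le> ln Q" "ln Q \<le> - t / 2 + (real K + 1) + real K * ln (t / 2 + 1)"
proof -
  interpret N: prob_space "null_unif K" by (rule null_prob)
  have e: "0 < \<tau> * exp (- t / 2)" "\<tau> * exp (- t / 2) \<le> 1"
    using \<tau> t by (auto intro: mult_le_one)
  have Qlo: "\<tau> * exp (- t / 2) \<le> Q" unfolding Q_def
    by (rule pv_lower[OF K gm g0 gt e]) auto
  then have Qpos: "0 < Q" using e by linarith
  have "ln (\<tau> * exp (- t / 2)) \<le> ln Q" using Qlo e by simp
  then show "ln \<tau> - t / 2 \<le> ln Q" using \<tau> by (simp add: ln_mult)
  have Q1: "Q \<le> 1" unfolding Q_def by simp
  have lnt: "0 \<le> ln (t / 2 + 1)" using t by simp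
  show "ln Q \<le> - t / 2 + (real K + 1) + real K * ln (t / 2 + 1)"
  proof (cases "real K \<le> t / 2")
    case False
    have "ln Q \<le> 0" using Qpos Q1 by simp
    moreover have "0 \<le> real K * ln (t / 2 + 1)" using lnt by simp
    ultimately show ?thesis using False by linarith
  next
    case True
    define M where "M = nat \<lfloor>t / 2 - real K\<rfloor>"
    have M1: "real M \<le> t / 2 - real K" "t / 2 - real K - 1 < real M"
      using True unfolding M_def by linarith+
    have "Q \<le> real (M + 1) ^ K * exp (- real M)" unfolding Q_def
      by (rule pv_upper[OF gle]) (use M1 in auto)
    then have "ln Q \<le> ln (real (M + 1) ^ K * exp (- real M))" using Qpos by simp
    also have "\<dots> = real K * ln (real M + 1) - real M"
      by (simp add: ln_mult ln_realpow)
    also have "\<dots> \<le> real K * ln (t / 2 + 1) - real M"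
    proof -
      have "ln (real M + 1) \<le> ln (t / 2 + 1)" using M1 by simp
      then show ?thesis by (simp add: mult_left_mono)
    qed
    finally show ?thesis using M1 by linarith
  qed
qed


lemma main_general:
  fixes M :: "'w measure"
    and K L :: nat
    and P :: "nat \<Rightarrow> nat \<Rightarrow> 'w \<Rightarrow> real"
    and N :: "nat \<Rightarrow> nat \<Rightarrow> nat"
    and c lam :: "nat \<Rightarrow> real"
    and \<tau> :: real and g :: "real \<Rightarrow> real"
  defines "nbar \<equiv> (\<lambda>m. (\<Sum>i=1..K. real (N i m)) / real K)"
  assumes K: "1 \<le> K"
    and pval_range: "\<forall>i\<in>{1..K}. \<forall>k \<omega>. 0 \<le> P i k \<omega> \<and> P i k \<omega> \<le> 1"
    and slopes: "\<forall>i\<in>{1..K}. AE \<omega> in M. (\<forall>\<^sub>F k in sequentially. 0 < P i k \<omega>) \<and>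
                   ((\<lambda>k. - (2 / real k) * ln (P i k \<omega>)) \<longlongrightarrow> c i) sequentially"
    and c_nonneg: "\<forall>i\<in>{1..K}. c i \<ge> 0"
    and N_lim: "\<forall>i\<in>{1..K}. filterlim (N i) at_top sequentially"
    and ratio: "\<forall>i\<in>{1..K}. ((\<lambda>m. real (N i m) / nbar m) \<longlongrightarrow> lam i) sequentially"
    and LK: "L \<le> K"
    and pos_exact: "\<forall>i\<in>{1..K}. (c i > 0 \<longleftrightarrow> i \<le> L)"
    and \<tau>: "0 < \<tau>" "\<tau> \<le> 1"
    and gm: "g \<in> borel_measurable borel"
    and g0: "\<And>x. 0 \<le> x \<Longrightarrow> x \<le> 1 \<Longrightarrow> 0 \<le> g x"
    and gle: "\<And>x. 0 \<le> x \<Longrightarrow> x \<le> 1 \<Longrightarrow> g x \<le> - 2 * ln x"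
    and gt: "\<And>t x. 0 \<le> t \<Longrightarrow> 0 < x \<Longrightarrow> x \<le> \<tau> * exp (- t / 2) \<Longrightarrow> t \<le> g x"
    and gclose: "\<And>x. 0 < x \<Longrightarrow> x \<le> 1 \<Longrightarrow> \<bar>g x + 2 * ln x\<bar> \<le> - 2 * ln \<tau>"
  shows "has_exact_slope M nbar
           (\<lambda>m \<omega>. comb_pvalue K g (\<lambda>i. P i (N i m) \<omega>)) (\<Sum>i=1..L. lam i * c i)"
proof -
  define S where "S = (\<Sum>i=1..L. lam i * c i)"
  have SK: "(\<Sum>i=1..K. lam i * c i) = S"
  proof -
    have "(\<Sum>i=1..K. lam i * c i) = (\<Sum>i=1..L. lam i * c i)"
    proof (rule sum.mono_neutral_right)
      show "\<forall>i\<in>{1..K} - {1..L}. lam i * c i = 0"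
      proof
        fix i assume i: "i \<in> {1..K} - {1..L}"
        then have "\<not> c i > 0" "c i \<ge> 0" using pos_exact c_nonneg by auto
        then show "lam i * c i = 0" by simp
      qed
    qed (use LK in auto)
    then show ?thesis unfolding S_def .
  qed
  have nbar_top: "filterlim nbar at_top sequentially"
  proof -
    have N1: "filterlim (\<lambda>m. real (N 1 m)) at_top sequentially"
    proof -
      have "filterlim (N 1) at_top sequentially" using N_lim K by auto
      from filterlim_compose[OF filterlim_real_sequentially this] show ?thesis by (simp add: o_def)
    qed
    have "filterlim (\<lambda>m. (1 / real K) * real (N 1 m)) at_top sequentially"
      by (rule filterlim_tendsto_pos_mult_at_top[OF tendsto_const _ N1]) (use K in auto)
    then show ?thesis
    proof (rule filterlim_at_top_mono)
      show "\<forall>\<^sub>F m in sequentially. 1 / real K * real (N 1 m) \<le> nbar m"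
      proof (rule always_eventually, rule allI)
        fix m
        have "real (N 1 m) \<le> (\<Sum>i=1..K. real (N i m))"
          by (rule member_le_sum) (use K in auto)
        then show "1 / real K * real (N 1 m) \<le> nbar m"
          unfolding nbar_def using K by (simp add: divide_right_mono)
      qed
    qed
  qed
  have nbar_pos: "\<forall>\<^sub>F m in sequentially. 0 < nbar m"
    using nbar_top by (simp add: filterlim_at_top_dense)
  have ninf: "filterlim nbar at_infinity sequentially"
    by (rule filterlim_at_top_imp_at_infinity[OF nbar_top])
  have AEall: "AE \<omega> in M. \<forall>i\<in>{1..K}. (\<forall>\<^sub>F k in sequentially. 0 < P i k \<omega>) \<and>
                   ((\<lambda>k. - (2 / real k) * ln (P i k \<omega>)) \<longlongrightarrow> c i) sequentially"
    using slopes by (subst AE_finite_all) auto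
  show ?thesis unfolding has_exact_slope_def S_def[symmetric]
    using AEall
  proof eventually_elim
    case (elim \<omega>)
    define t where "t = (\<lambda>m. comb_stat K g (\<lambda>i. P i (N i m) \<omega>))"
    have t0: "0 \<le> t m" for m
      unfolding t_def comb_stat_def using pval_range by (intro sum_nonneg g0) auto
    have tm: "((\<lambda>m. g (P i (N i m) \<omega>) / nbar m) \<longlongrightarrow> lam i * c i) sequentially"
      if i: "i \<in> {1..K}" for i
    proof -
      have Ni: "filterlim (N i) at_top sequentially" using N_lim i by auto
      have evpos: "\<forall>\<^sub>F m in sequentially. 0 < P i (N i m) \<omega>"
        using eventually_compose_filterlim[OF _ Ni] elim i by blast
      have evN: "\<forall>\<^sub>F m in sequentially. 0 < N i m"
      proof -
        have "\<forall>\<^sub>F m in sequentially. 1 \<le> N i m" using Ni unfolding filterlim_at_top by blast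
        then show ?thesis by (rule eventually_mono) auto
      qed
      have l1: "((\<lambda>m. - (2 / real (N i m)) * ln (P i (N i m) \<omega>)) \<longlongrightarrow> c i) sequentially"
        using filterlim_compose[OF _ Ni] elim i by blast
      have l2: "((\<lambda>m. (- (2 / real (N i m)) * ln (P i (N i m) \<omega>)) * (real (N i m) / nbar m))
                  \<longlongrightarrow> c i * lam i) sequentially"
        by (rule tendsto_mult[OF l1]) (use ratio i in auto)
      have l3: "((\<lambda>m. (- 2 * ln (P i (N i m) \<omega>)) / nbar m) \<longlongrightarrow> lam i * c i) sequentially"
      proof (rule Lim_transform_eventually)
        show "((\<lambda>m. (- (2 / real (N i m)) * ln (P i (N i m) \<omega>)) * (real (N i m) / nbar m))
                  \<longlongrightarrow> lam i * c i) sequentially" using l2 by (simp add: mult.commute)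
        show "\<forall>\<^sub>F m in sequentially. - (2 / real (N i m)) * ln (P i (N i m) \<omega>) * (real (N i m) / nbar m)
                = - 2 * ln (P i (N i m) \<omega>) / nbar m"
          using evN by eventually_elim auto
      qed
      have l4: "((\<lambda>m. (g (P i (N i m) \<omega>) + 2 * ln (P i (N i m) \<omega>)) / nbar m) \<longlongrightarrow> 0) sequentially"
      proof (rule Lim_null_comparison)
        show "((\<lambda>m. (- 2 * ln \<tau>) / nbar m) \<longlongrightarrow> 0) sequentially"
          by (rule tendsto_divide_0[OF tendsto_const ninf])
        show "\<forall>\<^sub>F m in sequentially. norm ((g (P i (N i m) \<omega>) + 2 * ln (P i (N i m) \<omega>)) / nbar m)
                \<le> (- 2 * ln \<tau>) / nbar m"
          using evpos nbar_pos
        proof eventually_elim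
          case (elim m)
          have "\<bar>g (P i (N i m) \<omega>) + 2 * ln (P i (N i m) \<omega>)\<bar> \<le> - 2 * ln \<tau>"
            using gclose elim pval_range i by auto
          then have "\<bar>g (P i (N i m) \<omega>) + 2 * ln (P i (N i m) \<omega>)\<bar> / nbar m \<le> (- 2 * ln \<tau>) / nbar m"
            using elim by (intro divide_right_mono) auto
          then show ?case using elim by (simp add: abs_divide)
        qed
      qed
      have "((\<lambda>m. (- 2 * ln (P i (N i m) \<omega>)) / nbar m
                 + (g (P i (N i m) \<omega>) + 2 * ln (P i (N i m) \<omega>)) / nbar m) \<longlongrightarrow> lam i * c i + 0) sequentially"
        by (rule tendsto_add[OF l3 l4])
      moreover have "(\<lambda>m. (- 2 * ln (P i (N i m) \<omega>)) / nbar m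
                 + (g (P i (N i m) \<omega>) + 2 * ln (P i (N i m) \<omega>)) / nbar m) = (\<lambda>m. g (P i (N i m) \<omega>) / nbar m)"
        by (rule ext) (simp add: add_divide_distrib)
      ultimately show ?thesis by simp
    qed
    have tS: "((\<lambda>m. t m / nbar m) \<longlongrightarrow> S) sequentially"
    proof -
      have "((\<lambda>m. \<Sum>i=1..K. g (P i (N i m) \<omega>) / nbar m) \<longlongrightarrow> (\<Sum>i=1..K. lam i * c i)) sequentially"
        by (rule tendsto_sum) (rule tm)
      then show ?thesis unfolding SK t_def comb_stat_def by (simp add: sum_divide_distrib)
    qed
    have pv: "comb_pvalue K g (\<lambda>i. P i (N i m) \<omega>) =
        measure (null_unif K) {u \<in> space (null_unif K). t m \<le> comb_stat K g u}" for m
      unfolding comb_pvalue_def t_def ..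
    have B1: "ln \<tau> - t m / 2 \<le> ln (comb_pvalue K g (\<lambda>i. P i (N i m) \<omega>))" for m
      unfolding pv by (rule pv_bounds(1)[OF K gm g0 gle gt[OF t0[of m]] \<tau> t0[of m]])
    have B2: "ln (comb_pvalue K g (\<lambda>i. P i (N i m) \<omega>)) \<le> - t m / 2 + (real K + 1) + real K * ln (t m / 2 + 1)" for m
      unfolding pv by (rule pv_bounds(2)[OF K gm g0 gle gt[OF t0[of m]] \<tau> t0[of m]])
    show ?case
      by (rule slope_squeeze[OF nbar_top t0 tS B1 B2 of_nat_0_le_iff])
  qed
qed


lemma ln01: "0 \<le> (x::real) \<Longrightarrow> x \<le> 1 \<Longrightarrow> ln x \<le> 0"
  by (cases "x = 0") auto

lemma ln_tau_bound:
  assumes "0 < \<tau>" "\<tau> \<le> 1" "0 \<le> (t::real)" "0 < x" "x \<le> \<tau> * exp (- t / 2)"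
  shows "ln x \<le> ln \<tau> - t / 2"
proof -
  have "ln x \<le> ln (\<tau> * exp (- t / 2))" using assms by simp
  then show ?thesis using assms by (simp add: ln_mult)
qed

lemma hard_facts:
  assumes \<tau>: "0 < \<tau>" "\<tau> \<le> 1"
  shows "tf_hard \<tau> \<in> borel_measurable borel"
    and "\<And>x. 0 \<le> x \<Longrightarrow> x \<le> 1 \<Longrightarrow> 0 \<le> tf_hard \<tau> x"
    and "\<And>x. 0 \<le> x \<Longrightarrow> x \<le> 1 \<Longrightarrow> tf_hard \<tau> x \<le> - 2 * ln x"
    and "\<And>t x. 0 \<le> t \<Longrightarrow> 0 < x \<Longrightarrow> x \<le> \<tau> * exp (- t / 2) \<Longrightarrow> t \<le> tf_hard \<tau> x"
    and "\<And>x. 0 < x \<Longrightarrow> x \<le> 1 \<Longrightarrow> \<bar>tf_hard \<tau> x + 2 * ln x\<bar> \<le> - 2 * ln \<tau>"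
proof -
  show "tf_hard \<tau> \<in> borel_measurable borel" unfolding tf_hard_def by measurable
  show "0 \<le> tf_hard \<tau> x" if "0 \<le> x" "x \<le> 1" for x
    using ln01[OF that] unfolding tf_hard_def by auto
  show "tf_hard \<tau> x \<le> - 2 * ln x" if "0 \<le> x" "x \<le> 1" for x
    using ln01[OF that] unfolding tf_hard_def by auto
  have lt: "ln \<tau> \<le> 0" using \<tau> by (intro ln01) auto
  show "t \<le> tf_hard \<tau> x" if "0 \<le> t" "0 < x" "x \<le> \<tau> * exp (- t / 2)" for t x
  proof -
    have "\<tau> * exp (- t / 2) \<le> \<tau> * 1" using \<tau> that(1) by (intro mult_left_mono) auto
    then have "x \<le> \<tau>" using that by linarith
    then show ?thesis using ln_tau_bound[OF \<tau> that] lt unfolding tf_hard_def by auto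
  qed
  show "\<bar>tf_hard \<tau> x + 2 * ln x\<bar> \<le> - 2 * ln \<tau>" if "0 < x" "x \<le> 1" for x
  proof (cases "x \<le> \<tau>")
    case True then show ?thesis using lt unfolding tf_hard_def by auto
  next
    case False
    then have "ln \<tau> \<le> ln x" using \<tau> by simp
    then show ?thesis using False ln01[of x] that unfolding tf_hard_def by auto
  qed
qed

lemma soft_facts:
  assumes \<tau>: "0 < \<tau>" "\<tau> \<le> 1"
  shows "tf_soft \<tau> \<in> borel_measurable borel"
    and "\<And>x. 0 \<le> x \<Longrightarrow> x \<le> 1 \<Longrightarrow> 0 \<le> tf_soft \<tau> x"
    and "\<And>x. 0 \<le> x \<Longrightarrow> x \<le> 1 \<Longrightarrow> tf_soft \<tau> x \<le> - 2 * ln x"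
    and "\<And>t x. 0 \<le> t \<Longrightarrow> 0 < x \<Longrightarrow> x \<le> \<tau> * exp (- t / 2) \<Longrightarrow> t \<le> tf_soft \<tau> x"
    and "\<And>x. 0 < x \<Longrightarrow> x \<le> 1 \<Longrightarrow> \<bar>tf_soft \<tau> x + 2 * ln x\<bar> \<le> - 2 * ln \<tau>"
proof -
  show "tf_soft \<tau> \<in> borel_measurable borel" unfolding tf_soft_def by measurable
  show "0 \<le> tf_soft \<tau> x" if "0 \<le> x" "x \<le> 1" for x
    unfolding tf_soft_def by auto
  have lt: "ln \<tau> \<le> 0" using \<tau> by (intro ln01) auto
  show "tf_soft \<tau> x \<le> - 2 * ln x" if "0 \<le> x" "x \<le> 1" for x
    using ln01[OF that] lt unfolding tf_soft_def by auto
  show "t \<le> tf_soft \<tau> x" if "0 \<le> t" "0 < x" "x \<le> \<tau> * exp (- t / 2)" for t x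
    using ln_tau_bound[OF \<tau> that] unfolding tf_soft_def by auto
  show "\<bar>tf_soft \<tau> x + 2 * ln x\<bar> \<le> - 2 * ln \<tau>" if "0 < x" "x \<le> 1" for x
  proof -
    have "ln x \<le> 0" using that by (intro ln01) auto
    then show ?thesis using lt unfolding tf_soft_def max_def by auto
  qed
qed

theorem theorem4:
  fixes M :: "'w measure"
    and K L :: nat
    and P :: "nat \<Rightarrow> nat \<Rightarrow> 'w \<Rightarrow> real"  \<comment> \<open>P i k \<omega>: p-value of test i at sample size k\<close>
    and N :: "nat \<Rightarrow> nat \<Rightarrow> nat"          \<comment> \<open>N i m: sample size n_i along the asymptotic index m\<close>
    and c lam :: "nat \<Rightarrow> real"
    and \<tau> :: real
  defines "nbar \<equiv> (\<lambda>m. (\<Sum>i=1..K. real (N i m)) / real K)"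
  assumes "prob_space M"
    and "1 \<le> K"
    and pval_range: "\<forall>i\<in>{1..K}. \<forall>k \<omega>. 0 \<le> P i k \<omega> \<and> P i k \<omega> \<le> 1"
    and slopes: "\<forall>i\<in>{1..K}. AE \<omega> in M. (\<forall>\<^sub>F k in sequentially. 0 < P i k \<omega>) \<and>
                   ((\<lambda>k. - (2 / real k) * ln (P i k \<omega>)) \<longlongrightarrow> c i) sequentially"
    and c_nonneg: "\<forall>i\<in>{1..K}. c i \<ge> 0"
    and N_lim: "\<forall>i\<in>{1..K}. filterlim (N i) at_top sequentially"
    and ratio: "\<forall>i\<in>{1..K}. ((\<lambda>m. real (N i m) / nbar m) \<longlongrightarrow> lam i) sequentially"
    and lam_pos: "\<forall>i\<in>{1..K}. lam i > 0"
    and lam_sum: "(\<Sum>i=1..K. lam i) = real K"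
    and order: "\<forall>i\<in>{1..K}. \<forall>j\<in>{1..K}. i \<le> j \<longrightarrow> lam j * c j \<le> lam i * c i"
    and "L \<le> K"
    and pos_exact: "\<forall>i\<in>{1..K}. (c i > 0 \<longleftrightarrow> i \<le> L)"
    and "0 < \<tau>" "\<tau> \<le> 1"
  shows "has_exact_slope M nbar
           (\<lambda>m \<omega>. comb_pvalue K (tf_hard \<tau>) (\<lambda>i. P i (N i m) \<omega>)) (\<Sum>i=1..L. lam i * c i)
       \<and> has_exact_slope M nbar
           (\<lambda>m \<omega>. comb_pvalue K (tf_soft \<tau>) (\<lambda>i. P i (N i m) \<omega>)) (\<Sum>i=1..L. lam i * c i)"
proof -
  note H = hard_facts[OF \<open>0 < \<tau>\<close> \<open>\<tau> \<le> 1\<close>]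
  note So = soft_facts[OF \<open>0 < \<tau>\<close> \<open>\<tau> \<le> 1\<close>]
  show ?thesis
  proof
    show "has_exact_slope M nbar
           (\<lambda>m \<omega>. comb_pvalue K (tf_hard \<tau>) (\<lambda>i. P i (N i m) \<omega>)) (\<Sum>i=1..L. lam i * c i)"
      unfolding nbar_def
      by (rule main_general[OF \<open>1 \<le> K\<close> pval_range slopes c_nonneg N_lim ratio[unfolded nbar_def] \<open>L \<le> K\<close> pos_exact \<open>0 < \<tau>\<close> \<open>\<tau> \<le> 1\<close> H])
    show "has_exact_slope M nbar
           (\<lambda>m \<omega>. comb_pvalue K (tf_soft \<tau>) (\<lambda>i. P i (N i m) \<omega>)) (\<Sum>i=1..L. lam i * c i)"
      unfolding nbar_def
      by (rule main_general[OF \<open>1 \<le> K\<close> pval_range slopes c_nonneg N_lim ratio[unfolded nbar_def] \<open>L \<le> K\<close> pos_exact \<open>0 < \<tau>\<close> \<open>\<tau> \<le> 1\<close> So])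
  qed
qed


end
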